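(* Let $G$ be a cubic graph of order $n\ge 6$ and $A$ a cubic graph of order $4r$ ($r$ a positive integer). Then for any graph $G\circ A^-$, \[c_2(G\circ A^-)-\left\lceil\frac{|V(G\circ A^-)|+2}{4}\right\rceil\ge\left\lfloor\frac{n-2}{4}\right\rfloor.\]
   Context: Let $G$ and $A$ be $3$-regular graphs, let $a$ be a vertex of $A$ and $A^-=A-a$. A graph $G\circ A^-$ is any graph obtained by replacing each vertex $v$ of $G$ by a copy $A^-_v$ of $A^-$ and, for each edge $uv$ of $G$, adding an edge joining a vertex of degree $2$ of $A^-_u$ to a vertex of degree $2$ of $A^-_v$, so that each degree-$2$ vertex of each copy is incident with exactly one added edge (the choices of $a$ and of these edges are arbitrary). For a graph $H=(V,E)$ and $S_0\subseteq V$, the irreversible $2$-threshold conversion process sets $S_t=S_{t-1}\cup\{v: v \text{ has at least } 2 \text{ neighbours in } S_{t-1}\}$ for $t\ge1$; $S_0$ is a $2$-conversion set if $S_t=V$ for some $t$, and $c_2(H)$ is the minimum size of a $2$-conversion set. *)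

theory Defs
  imports Complex_Main
begin

definition simple_graph :: "'a set \<Rightarrow> ('a \<Rightarrow> 'a \<Rightarrow> bool) \<Rightarrow> bool" where
  "simple_graph V E \<longleftrightarrow> finite V \<and> (\<forall>x y. E x y \<longrightarrow> x \<in> V \<and> y \<in> V)
     \<and> (\<forall>x y. E x y \<longrightarrow> E y x) \<and> (\<forall>x. \<not> E x x)"

definition nbrs :: "('a \<Rightarrow> 'a \<Rightarrow> bool) \<Rightarrow> 'a \<Rightarrow> 'a set" where
  "nbrs E v = {w. E v w}"

definition cubic :: "'a set \<Rightarrow> ('a \<Rightarrow> 'a \<Rightarrow> bool) \<Rightarrow> bool" where
  "cubic V E \<longleftrightarrow> simple_graph V E \<and> (\<forall>v\<in>V. card (nbrs E v) = 3)"

definition conv_step :: "'a set \<Rightarrow> ('a \<Rightarrow> 'a \<Rightarrow> bool) \<Rightarrow> 'a set \<Rightarrow> 'a set" where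
  "conv_step V E S = S \<union> {v \<in> V. card (nbrs E v \<inter> S) \<ge> 2}"

definition is_2conv_set :: "'a set \<Rightarrow> ('a \<Rightarrow> 'a \<Rightarrow> bool) \<Rightarrow> 'a set \<Rightarrow> bool" where
  "is_2conv_set V E S0 \<longleftrightarrow> S0 \<subseteq> V \<and> (\<exists>t. (conv_step V E ^^ t) S0 = V)"

definition c2 :: "'a set \<Rightarrow> ('a \<Rightarrow> 'a \<Rightarrow> bool) \<Rightarrow> nat" where
  "c2 V E = (LEAST k. \<exists>S. is_2conv_set V E S \<and> card S = k)"

text \<open>H (on vertex set VG \<times> (VA - {a})) is a graph G \<circ> A^- built with removed vertex a:
  each copy {v} \<times> (VA - {a}) induces A - a; added edges only join degree-2 vertices
  (neighbours of a in A) of copies u, v with uv an edge of G; for each edge uv of G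
  exactly one added edge joins the two copies; and each degree-2 vertex of each copy
  is incident with exactly one added edge.\<close>
definition is_comp_graph ::
  "'g set \<Rightarrow> ('g \<Rightarrow> 'g \<Rightarrow> bool) \<Rightarrow> 'b set \<Rightarrow> ('b \<Rightarrow> 'b \<Rightarrow> bool) \<Rightarrow> 'b
    \<Rightarrow> ('g \<times> 'b \<Rightarrow> 'g \<times> 'b \<Rightarrow> bool) \<Rightarrow> bool" where
  "is_comp_graph VG EG VA EA a H \<longleftrightarrow>
     a \<in> VA \<and>
     (\<forall>p q. H p q \<longrightarrow> p \<in> VG \<times> (VA - {a}) \<and> q \<in> VG \<times> (VA - {a})) \<and>
     (\<forall>p q. H p q \<longrightarrow> H q p) \<and>
     (\<forall>v\<in>VG. \<forall>x\<in>VA - {a}. \<forall>y\<in>VA - {a}. H (v, x) (v, y) \<longleftrightarrow> EA x y) \<and>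
     (\<forall>u v x y. u \<noteq> v \<longrightarrow> H (u, x) (v, y) \<longrightarrow> EG u v \<and> EA a x \<and> EA a y) \<and>
     (\<forall>u v. EG u v \<longrightarrow> (\<exists>!(x, y). H (u, x) (v, y))) \<and>
     (\<forall>u\<in>VG. \<forall>x. EA a x \<longrightarrow> (\<exists>!(v, y). v \<noteq> u \<and> H (u, x) (v, y)))"

end

theory Submission
  imports Defs
begin

lemma pair_count:
  fixes F :: "'c set" and R :: "'c \<Rightarrow> 'c \<Rightarrow> bool" and \<tau> :: "'c \<Rightarrow> nat"
  assumes fF: "finite F" and ne: "F \<noteq> {}" and sym: "\<forall>w q. R w q \<longrightarrow> R q w"
    and irr: "\<forall>w. \<not> R w w"
    and up: "\<forall>w\<in>F. card {q\<in>F. R w q \<and> \<tau> w \<le> \<tau> q} \<le> 1"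
  shows "card {(w,q). w\<in>F \<and> q\<in>F \<and> R w q} + 2 \<le> 2 * card F"
proof -
  define Up where "Up w = {q\<in>F. R w q \<and> \<tau> w \<le> \<tau> q}" for w
  define P1 where "P1 = Sigma F Up"
  define P1s where "P1s = {(w,q). w\<in>F \<and> q\<in>F \<and> R w q \<and> \<tau> w < \<tau> q}"
  define P2 where "P2 = {(w,q). w\<in>F \<and> q\<in>F \<and> R w q \<and> \<tau> q < \<tau> w}"
  have fin: "finite (F\<times>F)" using fF by simp
  have P_eq: "{(w,q). w\<in>F \<and> q\<in>F \<and> R w q} = P1 \<union> P2" by (auto simp: P1_def P2_def Up_def)
  have disj: "P1 \<inter> P2 = {}" by (auto simp: P1_def P2_def Up_def)
  have finP1: "finite P1" by (rule finite_subset[OF _ fin]) (auto simp: P1_def Up_def)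
  have finP2: "finite P2" by (rule finite_subset[OF _ fin]) (auto simp: P2_def)
  have finP1s: "finite P1s" by (rule finite_subset[OF _ fin]) (auto simp: P1s_def)
  have cardP: "card {(w,q). w\<in>F \<and> q\<in>F \<and> R w q} = card P1 + card P2"
    using P_eq disj card_Un_disjoint finP1 finP2 by simp
  have c1: "card P1 = (\<Sum>w\<in>F. card (Up w))" unfolding P1_def
    by (rule card_SigmaI) (auto simp: Up_def fF)
  have P2s: "P2 \<subseteq> prod.swap ` P1s"
  proof
    fix p assume "p \<in> P2"
    then obtain w q where p: "p = (w,q)" "w\<in>F" "q\<in>F" "R w q" "\<tau> q < \<tau> w" by (auto simp: P2_def)
    then have "(q,w) \<in> P1s" using sym by (auto simp: P1s_def)
    then show "p \<in> prod.swap ` P1s" using p by force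
  qed
  have c2: "card P2 \<le> card P1s"
    using card_mono[OF finite_imageI[OF finP1s] P2s] card_image_le[OF finP1s, of prod.swap] by linarith
  have P1sP1: "P1s \<subseteq> P1" by (auto simp: P1s_def P1_def Up_def)
  define M where "M = Max (\<tau> ` F)"
  have "M \<in> \<tau> ` F" unfolding M_def using fF ne by simp
  then obtain m where m1: "m \<in> F" and mM: "\<tau> m = M" by blast
  have m2: "\<forall>w\<in>F. \<tau> w \<le> \<tau> m" using mM fF by (simp add: M_def)
  have sumle: "\<forall>w\<in>F. card (Up w) \<le> 1" using up by (simp add: Up_def)
  have sF: "(\<Sum>w\<in>F. card (Up w)) \<le> card F"
  proof -
    have "(\<Sum>w\<in>F. card (Up w)) \<le> (\<Sum>w\<in>F. 1)" by (rule sum_mono) (use sumle in auto)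
    then show ?thesis by simp
  qed
  show ?thesis
  proof (cases "Up m = {}")
    case True
    have "(\<Sum>w\<in>F. card (Up w)) = (\<Sum>w\<in>F-{m}. card (Up w))"
      using sum.remove[OF fF m1, of "\<lambda>w. card (Up w)"] True by simp
    also have "\<dots> \<le> (\<Sum>w\<in>F-{m}. 1)" by (rule sum_mono) (use sumle in auto)
    also have "\<dots> = card F - 1" using m1 fF by simp
    finally have "card P1 \<le> card F - 1" using c1 by simp
    moreover have "card P1s \<le> card P1" using card_mono[OF finP1 P1sP1] .
    moreover have "card F \<ge> 1" using fF ne by (simp add: Suc_leI card_gt_0_iff)
    ultimately show ?thesis using cardP c2 by linarith
  next
    case False
    then obtain u where u: "u \<in> Up m" by blast
    then have uF: "u\<in>F" and Rmu: "R m u" and le: "\<tau> m \<le> \<tau> u" by (auto simp: Up_def)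
    have eq: "\<tau> u = \<tau> m" using m2 uF le by force
    have um: "u \<noteq> m" using Rmu irr by auto
    have in1: "(m,u) \<in> P1" using uF m1 Rmu le by (auto simp: P1_def Up_def)
    have in2: "(u,m) \<in> P1" using uF m1 Rmu eq sym by (auto simp: P1_def Up_def)
    have "P1s \<subseteq> P1 - {(m,u),(u,m)}" using P1sP1 eq by (auto simp: P1s_def)
    then have "card P1s \<le> card (P1 - {(m,u),(u,m)})" using finP1 by (simp add: card_mono)
    also have "\<dots> = card P1 - 2" using in1 in2 um finP1 by (simp add: card_Diff_subset)
    finally have "card P1s \<le> card P1 - 2" .
    moreover have "card {(m,u),(u,m)} \<le> card P1" using in1 in2 finP1 by (intro card_mono) auto
    moreover have "card {(m,u),(u,m)} = 2" using um by simp
    ultimately show ?thesis using cardP c2 c1 sF by linarith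
  qed
qed

lemma deg_le3:
  assumes cA: "cubic VA EA" and cg: "is_comp_graph VG EG VA EA a H"
    and u: "u \<in> VG" and x: "x \<in> VA - {a}"
  shows "card (nbrs H (u,x)) \<le> 3"
proof -
  have sg: "simple_graph VA EA" and dA: "card (nbrs EA x) = 3"
    using cA x by (auto simp: cubic_def)
  have fA: "finite VA" and sA: "\<forall>x y. EA x y \<longrightarrow> x \<in> VA \<and> y \<in> VA"
    and symA: "\<forall>x y. EA x y \<longrightarrow> EA y x" using sg by (auto simp: simple_graph_def)
  have c2: "\<forall>p q. H p q \<longrightarrow> p \<in> VG \<times> (VA - {a}) \<and> q \<in> VG \<times> (VA - {a})"
    using cg unfolding is_comp_graph_def by (elim conjE) assumption
  have c4: "\<forall>v\<in>VG. \<forall>x\<in>VA - {a}. \<forall>y\<in>VA - {a}. H (v, x) (v, y) \<longleftrightarrow> EA x y"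
    using cg unfolding is_comp_graph_def by (elim conjE) assumption
  have c5: "\<forall>u v x y. u \<noteq> v \<longrightarrow> H (u, x) (v, y) \<longrightarrow> EG u v \<and> EA a x \<and> EA a y"
    using cg unfolding is_comp_graph_def by (elim conjE) assumption
  have c7: "\<forall>u\<in>VG. \<forall>x. EA a x \<longrightarrow> (\<exists>!(v, y). v \<noteq> u \<and> H (u, x) (v, y))"
    using cg unfolding is_comp_graph_def by (elim conjE) assumption
  define I where "I = Pair u ` (nbrs EA x - {a})"
  define X where "X = {p. case p of (v,y) \<Rightarrow> v \<noteq> u \<and> H (u,x) (v,y)}"
  have sub: "nbrs H (u,x) \<subseteq> I \<union> X"
  proof
    fix q assume q: "q \<in> nbrs H (u,x)"
    obtain v y where qv: "q = (v,y)" by (cases q)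
    show "q \<in> I \<union> X"
    proof (cases "v = u")
      case True
      have H: "H (u,x) (u,y)" using q qv True by (simp add: nbrs_def)
      then have "y \<in> VA - {a}" using c2 by blast
      then have "EA x y" using c4 u x H by blast
      then show ?thesis using qv True \<open>y \<in> VA - {a}\<close> by (auto simp: I_def nbrs_def)
    next
      case False
      then show ?thesis using q qv by (auto simp: X_def nbrs_def)
    qed
  qed
  have fnA: "finite (nbrs EA x)" by (rule finite_subset[of _ VA]) (use fA sA in \<open>auto simp: nbrs_def\<close>)
  have cI: "card I \<le> card (nbrs EA x - {a})" unfolding I_def by (rule card_image_le) (use fnA in simp)
  have "card X + card (nbrs EA x - {a}) \<le> 3 \<and> finite X"
  proof (cases "EA a x")
    case True
    have "a \<in> nbrs EA x" using True symA by (simp add: nbrs_def)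
    then have "card (nbrs EA x - {a}) = 2" using dA fnA by simp
    moreover have "card X \<le> 1 \<and> finite X"
    proof -
      have E: "\<exists>!p. (case p of (v,y) \<Rightarrow> v \<noteq> u \<and> H (u,x) (v,y))"
        by (rule c7[rule_format, OF u True])
      then obtain p0 where P0: "case p0 of (v,y) \<Rightarrow> v \<noteq> u \<and> H (u,x) (v,y)"
        and U: "\<And>p. (case p of (v,y) \<Rightarrow> v \<noteq> u \<and> H (u,x) (v,y)) \<Longrightarrow> p = p0"
        by (elim ex1E) blast
      have "X = {p0}"
      proof
        show "X \<subseteq> {p0}" using U unfolding X_def by blast
        show "{p0} \<subseteq> X" using P0 unfolding X_def by blast
      qed
      then show ?thesis by simp
    qed
    ultimately show ?thesis by simp
  next
    case False
    have "\<not> (v \<noteq> u \<and> H (u,x) (v,y))" for v y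
      using c5 False by metis
    then have "X = {}" unfolding X_def by auto
    then show ?thesis using dA card_Diff1_le[of "nbrs EA x" a] by simp
  qed
  then have "card (I \<union> X) \<le> 3" and fX: "finite X" using cI card_Un_le[of I X] by (linarith, blast)
  moreover have "finite (I \<union> X)" using fX fnA by (simp add: I_def)
  ultimately show ?thesis using card_mono[OF _ sub] by (meson le_trans)
qed

lemma conv_sub: "S \<subseteq> conv_step V E S" by (auto simp: conv_step_def)

lemma conv_mono: "t \<le> t' \<Longrightarrow> (conv_step V E ^^ t) S \<subseteq> (conv_step V E ^^ t') S"
  by (rule lift_Suc_mono_le[of "\<lambda>t. (conv_step V E ^^ t) S"]) (auto simp: conv_step_def)

lemma copy_bound:
  assumes cA: "cubic VA EA" and cg: "is_comp_graph VG EG VA EA a H"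
    and cVA: "card VA = 4 * r" and rpos: "r > 0" and fG: "finite VG"
    and conv: "is_2conv_set (VG \<times> (VA - {a})) H S0" and v: "v \<in> VG"
  shows "r \<le> card {x \<in> VA - {a}. (v,x) \<in> S0}"
proof -
  define V where "V = VG \<times> (VA - {a})"
  have sg: "simple_graph VA EA" and dA: "\<forall>x\<in>VA. card (nbrs EA x) = 3"
    using cA by (auto simp: cubic_def)
  have fA: "finite VA" and sA: "\<forall>x y. EA x y \<longrightarrow> x \<in> VA \<and> y \<in> VA"
    and symA: "\<forall>x y. EA x y \<longrightarrow> EA y x" and irrA: "\<forall>x. \<not> EA x x"
    using sg by (auto simp: simple_graph_def)
  have aA: "a \<in> VA" using cg unfolding is_comp_graph_def by (elim conjE) assumption
  have c2: "\<forall>p q. H p q \<longrightarrow> p \<in> VG \<times> (VA - {a}) \<and> q \<in> VG \<times> (VA - {a})"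
    using cg unfolding is_comp_graph_def by (elim conjE) assumption
  have c4: "\<forall>v\<in>VG. \<forall>x\<in>VA - {a}. \<forall>y\<in>VA - {a}. H (v, x) (v, y) \<longleftrightarrow> EA x y"
    using cg unfolding is_comp_graph_def by (elim conjE) assumption
  have HV: "\<And>p q. H p q \<Longrightarrow> q \<in> V" using c2 unfolding V_def by blast
  have fV: "finite V" using fA fG by (simp add: V_def)
  obtain T where T: "(conv_step V H ^^ T) S0 = V" and S0V: "S0 \<subseteq> V"
    using conv unfolding is_2conv_set_def V_def by blast
  define St where "St t = (conv_step V H ^^ t) S0" for t
  define \<tau> where "\<tau> p = (LEAST t. p \<in> St t)" for p
  have mono: "t \<le> t' \<Longrightarrow> St t \<subseteq> St t'" for t t' unfolding St_def by (rule conv_mono)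
  have St0: "St 0 = S0" by (simp add: St_def)
  have StSuc: "St (Suc k) = conv_step V H (St k)" for k by (simp add: St_def)
  have inT: "p \<in> St (\<tau> p)" if "p \<in> V" for p
    unfolding \<tau>_def by (rule LeastI[of _ T]) (use T that in \<open>simp add: St_def\<close>)
  have le_iff: "p \<in> St t \<longleftrightarrow> \<tau> p \<le> t" if "p \<in> V" for p t
  proof
    assume "p \<in> St t" then show "\<tau> p \<le> t" unfolding \<tau>_def by (rule Least_le)
  next
    assume "\<tau> p \<le> t" then show "p \<in> St t" using mono inT[OF that] by blast
  qed
  have key: "\<exists>k. \<tau> p = Suc k \<and> card (nbrs H p - St k) \<le> 1" if p: "p \<in> V - S0" for p
  proof -
    have pV: "p \<in> V" using p by simp
    have "\<tau> p \<noteq> 0" using inT[OF pV] St0 p by (metis DiffD2)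
    then obtain k where k: "\<tau> p = Suc k" using not0_implies_Suc by blast
    have nk: "p \<notin> St k" using le_iff[OF pV, of k] k by simp
    have "p \<in> St (Suc k)" using inT[OF pV] k by simp
    then have two: "card (nbrs H p \<inter> St k) \<ge> 2" using nk StSuc[of k] by (simp add: conv_step_def)
    obtain u x where ux: "p = (u,x)" "u \<in> VG" "x \<in> VA - {a}" using pV V_def by auto
    have three: "card (nbrs H p) \<le> 3" using deg_le3[OF cA cg ux(2) ux(3)] ux(1) by simp
    have fn: "finite (nbrs H p)"
      by (rule finite_subset[OF _ fV]) (unfold nbrs_def, use HV in blast)
    have "card (nbrs H p) = card (nbrs H p \<inter> St k) + card (nbrs H p - St k)"
      by (rule card_Int_Diff[OF fn])
    then show ?thesis using k two three by auto
  qed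
  define F where "F = {x \<in> VA - {a}. (v,x) \<notin> S0}"
  define S where "S = {x \<in> VA - {a}. (v,x) \<in> S0}"
  have FS: "F \<union> S = VA - {a}" "F \<inter> S = {}" by (auto simp: F_def S_def)
  have fF: "finite F" and fS: "finite S" using fA by (auto simp: F_def S_def)
  have cardFS: "card F + card S = 4 * r - 1"
    using card_Un_disjoint[OF fF fS FS(2)] FS(1) cVA aA fA by simp
  show ?thesis
  proof (cases "F = {}")
    case True
    then have "card S = 4 * r - 1" using cardFS by simp
    then show ?thesis using rpos unfolding S_def by simp
  next
    case False
    define \<tau>' where "\<tau>' x = \<tau> (v,x)" for x
    have up: "\<forall>w\<in>F. card {q\<in>F. EA w q \<and> \<tau>' w \<le> \<tau>' q} \<le> 1"
    proof
      fix w assume wF: "w \<in> F"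
      then have "(v,w) \<in> V - S0" using v by (auto simp: F_def V_def)
      then obtain k where k: "\<tau> (v,w) = Suc k" and c1: "card (nbrs H (v,w) - St k) \<le> 1"
        using key by blast
      have sub: "Pair v ` {q\<in>F. EA w q \<and> \<tau>' w \<le> \<tau>' q} \<subseteq> nbrs H (v,w) - St k"
      proof
        fix p assume "p \<in> Pair v ` {q\<in>F. EA w q \<and> \<tau>' w \<le> \<tau>' q}"
        then obtain q where q: "p = (v,q)" "q \<in> F" "EA w q" "\<tau>' w \<le> \<tau>' q" by blast
        have qA: "q \<in> VA - {a}" and wA: "w \<in> VA - {a}" using q(2) wF by (auto simp: F_def)
        have "H (v,w) (v,q)" using c4 v qA wA q(3) by blast
        moreover have "(v,q) \<notin> St k"
        proof
          assume "(v,q) \<in> St k"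
          then have "\<tau> (v,q) \<le> k" using le_iff[of "(v,q)" k] v qA by (simp add: V_def)
          then show False using q(4) k by (simp add: \<tau>'_def)
        qed
        ultimately show "p \<in> nbrs H (v,w) - St k" using q(1) by (simp add: nbrs_def)
      qed
      have fn: "finite (nbrs H (v,w) - St k)"
        by (rule finite_subset[OF _ fV]) (unfold nbrs_def, use HV in blast)
      have "card {q\<in>F. EA w q \<and> \<tau>' w \<le> \<tau>' q} = card (Pair v ` {q\<in>F. EA w q \<and> \<tau>' w \<le> \<tau>' q})"
        by (rule card_image[symmetric]) (simp add: inj_on_def)
      also have "\<dots> \<le> card (nbrs H (v,w) - St k)" by (rule card_mono[OF fn sub])
      finally show "card {q\<in>F. EA w q \<and> \<tau>' w \<le> \<tau>' q} \<le> 1" using c1 by simp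
    qed
    have pc: "card {(w,q). w\<in>F \<and> q\<in>F \<and> EA w q} + 2 \<le> 2 * card F"
      by (rule pair_count[OF fF False _ _ up]) (use symA irrA in auto)
    define PF where "PF = {(w,q). w\<in>F \<and> q\<in>VA \<and> EA w q}"
    have FA: "F \<subseteq> VA" by (auto simp: F_def)
    have "PF = Sigma F (nbrs EA)" using sA by (auto simp: PF_def nbrs_def)
    moreover have "\<forall>w\<in>F. finite (nbrs EA w)"
      using fA sA by (auto intro: finite_subset[of _ VA] simp: nbrs_def)
    ultimately have "card PF = (\<Sum>w\<in>F. card (nbrs EA w))"
      using card_SigmaI[OF fF] by simp
    also have "\<dots> = (\<Sum>w\<in>F. 3)" using dA FA by (intro sum.cong) auto
    finally have cPF: "card PF = 3 * card F" by simp
    define P1 where "P1 = {(w,q). w\<in>F \<and> q\<in>F \<and> EA w q}"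
    define P2 where "P2 = {(w,q). w\<in>F \<and> q\<in>S \<and> EA w q}"
    define P3 where "P3 = {(w,q). w\<in>F \<and> q = a \<and> EA w q}"
    have fAA: "finite (VA \<times> VA)" using fA by simp
    have fP1: "finite P1" by (rule finite_subset[OF _ fAA]) (use sA in \<open>auto simp: P1_def\<close>)
    have fP2: "finite P2" by (rule finite_subset[OF _ fAA]) (use sA in \<open>auto simp: P2_def\<close>)
    have fP3: "finite P3" by (rule finite_subset[OF _ fAA]) (use sA in \<open>auto simp: P3_def\<close>)
    have "PF \<subseteq> P1 \<union> P2 \<union> P3" using FS(1) by (auto simp: PF_def P1_def P2_def P3_def)
    then have "card PF \<le> card (P1 \<union> P2 \<union> P3)" using fP1 fP2 fP3 by (simp add: card_mono)
    also have "\<dots> \<le> card P1 + card P2 + card P3"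
      by (meson add_mono_thms_linordered_semiring(3) card_Un_le le_trans)
    finally have c123: "3 * card F \<le> card P1 + card P2 + card P3" using cPF by simp
    have fnA: "finite (nbrs EA y)" for y
      by (rule finite_subset[of _ VA]) (use fA sA in \<open>auto simp: nbrs_def\<close>)
    have "P3 \<subseteq> (\<lambda>q. (q,a)) ` nbrs EA a" using symA by (auto simp: P3_def nbrs_def)
    then have "card P3 \<le> card ((\<lambda>q. (q,a)) ` nbrs EA a)" by (intro card_mono) (use fnA in auto)
    also have "\<dots> \<le> card (nbrs EA a)" by (rule card_image_le[OF fnA])
    finally have c3: "card P3 \<le> 3" using dA aA by simp
    have fSig: "finite (Sigma S (nbrs EA))" using fS fnA by simp
    have "P2 \<subseteq> prod.swap ` Sigma S (nbrs EA)" using symA by (auto simp: P2_def nbrs_def)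
    then have "card P2 \<le> card (prod.swap ` Sigma S (nbrs EA))" by (intro card_mono) (use fSig in auto)
    also have "\<dots> \<le> card (Sigma S (nbrs EA))" by (rule card_image_le[OF fSig])
    also have "\<dots> = (\<Sum>y\<in>S. card (nbrs EA y))" by (rule card_SigmaI[OF fS]) (simp add: fnA)
    also have "\<dots> = 3 * card S" using dA by (simp add: S_def)
    finally have c2': "card P2 \<le> 3 * card S" .
    have "card F \<le> 3 * card S + 1" using c123 c2' c3 pc unfolding P1_def by linarith
    then show ?thesis using cardFS rpos unfolding S_def by linarith
  qed
qed

theorem proposition5p16:
  fixes VG :: "'g set" and EG :: "'g \<Rightarrow> 'g \<Rightarrow> bool"
    and VA :: "'b set" and EA :: "'b \<Rightarrow> 'b \<Rightarrow> bool"
    and a :: 'b and H :: "'g \<times> 'b \<Rightarrow> 'g \<times> 'b \<Rightarrow> bool"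
    and n r :: nat
  assumes "cubic VG EG" and "card VG = n" and "n \<ge> 6"
    and "cubic VA EA" and "r > 0" and "card VA = 4 * r"
    and "is_comp_graph VG EG VA EA a H"
  shows "int (c2 (VG \<times> (VA - {a})) H)
           - \<lceil>(real (card (VG \<times> (VA - {a}))) + 2) / 4\<rceil>
         \<ge> \<lfloor>(real n - 2) / 4\<rfloor>"
proof -
  define V where "V = VG \<times> (VA - {a})"
  have fG: "finite VG" using assms(1) by (simp add: cubic_def simple_graph_def)
  have fA: "finite VA" using assms(4) by (simp add: cubic_def simple_graph_def)
  have aA: "a \<in> VA" using assms(7) unfolding is_comp_graph_def by (elim conjE) assumption
  have lower: "n * r \<le> card S0" if S0: "is_2conv_set V H S0" for S0
  proof -
    have sub: "S0 \<subseteq> V" using S0 by (simp add: is_2conv_set_def)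
    have eq: "S0 = Sigma VG (\<lambda>v. {x \<in> VA - {a}. (v,x) \<in> S0})" using sub by (auto simp: V_def)
    have "card S0 = (\<Sum>v\<in>VG. card {x \<in> VA - {a}. (v,x) \<in> S0})"
      by (subst eq, rule card_SigmaI[OF fG]) (use fA in auto)
    also have "\<dots> \<ge> (\<Sum>v\<in>VG. r)"
      by (rule sum_mono, rule copy_bound[OF assms(4) assms(7) assms(6) assms(5) fG])
         (use S0 in \<open>auto simp: V_def\<close>)
    finally show ?thesis using assms(2) by (simp add: mult.commute)
  qed
  have ex: "is_2conv_set V H V" unfolding is_2conv_set_def by (rule conjI, simp, rule exI[of _ 0], simp)
  have "\<exists>S. is_2conv_set V H S \<and> card S = c2 V H"
    unfolding c2_def by (rule LeastI_ex) (use ex in blast)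
  then have cge: "n * r \<le> c2 V H" using lower by metis
  have cV: "card V = n * (4 * r - 1)" using assms(2) assms(6) aA fA by (simp add: V_def card_cartesian_product)
  define k where "k = \<lfloor>(real n - 2) / 4\<rfloor>"
  have k1: "real_of_int k \<le> (real n - 2) / 4" unfolding k_def by (rule of_int_floor_le)
  have "(real (card V) + 2) / 4 \<le> real_of_int (int (n * r) - k)"
  proof -
    have "real (card V) = 4 * (real n * real r) - real n"
      using cV assms(5) by (simp add: of_nat_diff algebra_simps)
    then show ?thesis using k1 by simp
  qed
  then have "\<lceil>(real (card V) + 2) / 4\<rceil> \<le> int (n * r) - k" by (simp add: ceiling_le_iff)
  then show ?thesis using cge unfolding V_def[symmetric] k_def[symmetric] by linarith
qed

end
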